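(* Let $m\ge1$ and let $T$ be a finite tree with labels in an alphabet $\Gamma\supseteq\{a_1,\dots,a_m,\varepsilon\}$, in which every node has at most $m+1$ children and every leaf and every node with at least $2$ children is labelled $\varepsilon$. Let $N\ge1$. If for each $a\in\{a_1,\dots,a_m\}$ the tree $T$ contains at least $N$ nodes labelled $a$, then for each $a\in\{a_1,\dots,a_m\}$ we have $\mathrm{score}_a(T)\ge\log_{m+1}N$.
   Context: For a letter $a$, $\mathrm{score}_a(T)$ is defined recursively: if $T$ is a single leaf, $\mathrm{score}_a(T)=0$; if the root of $T$ has label $\gamma$ and exactly one child subtree $T_1$, then $\mathrm{score}_a(T)=\mathrm{score}_a(T_1)+\iota_a(\gamma)$ where $\iota_a(\gamma)=1$ if $\gamma=a$ and $0$ otherwise; if the root (labelled $\varepsilon$) has child subtrees $T_1,\dots,T_k$ with $k\ge2$, then $\mathrm{score}_a(T)=\max_{1\le i\le k}\big(\mathrm{score}_a(T_i)+\iota\big(\sum_{j\ne i}\mathrm{score}_a(T_j)\big)\big)$, where for a natural number $x$, $\iota(x)=0$ if $x=0$ and $\iota(x)=1$ if $x>0$. *)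

theory Defs
  imports Complex_Main
begin

datatype 'g ltree = Node 'g "'g ltree list"

definition iota :: "nat \<Rightarrow> nat" where
  "iota x = (if x = 0 then 0 else 1)"

definition iota_lbl :: "'g \<Rightarrow> 'g \<Rightarrow> nat" where
  "iota_lbl a g = (if g = a then 1 else 0)"

fun score :: "'g \<Rightarrow> 'g ltree \<Rightarrow> nat" where
  "score a (Node g []) = 0"
| "score a (Node g [t]) = score a t + iota_lbl a g"
| "score a (Node g (t1 # t2 # ts)) =
     (let ss = map (score a) (t1 # t2 # ts) in
      Max {ss ! i + iota (\<Sum>j\<in>{..<length ss} - {i}. ss ! j) | i. i < length ss})"

fun count_lbl :: "'g \<Rightarrow> 'g ltree \<Rightarrow> nat" where
  "count_lbl a (Node g ts) = iota_lbl a g + sum_list (map (count_lbl a) ts)"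

fun wf_tree :: "nat \<Rightarrow> 'g \<Rightarrow> 'g ltree \<Rightarrow> bool" where
  "wf_tree m eps (Node g ts) =
     (length ts \<le> m + 1 \<and> (length ts \<noteq> 1 \<longrightarrow> g = eps) \<and> (\<forall>t\<in>set ts. wf_tree m eps t))"

end

theory Submission
  imports Defs
begin

lemma abs_bound:
  fixes f c :: "nat \<Rightarrow> nat" and K n S :: nat
  assumes "n \<le> K" "0 < n"
    and c: "\<forall>i<n. c i \<le> K ^ f i" and z: "\<forall>i<n. f i = 0 \<longrightarrow> c i = 0"
    and S: "\<forall>i<n. f i + iota (\<Sum>j\<in>{..<n}-{i}. f j) \<le> S"
  shows "(\<Sum>i<n. c i) \<le> K ^ S"
proof -
  define M where "M = Max (f ` {..<n})"
  have "M \<in> f ` {..<n}" unfolding M_def using assms(2) by (intro Max_in) auto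
  then obtain i0 where i0: "i0 < n" "f i0 = M" by auto
  have fle: "\<forall>i<n. f i \<le> M" unfolding M_def by auto
  have K1: "1 \<le> K" using assms(1,2) by simp
  show ?thesis
  proof (cases "(\<Sum>j\<in>{..<n}-{i0}. f j) = 0")
    case True
    have "\<forall>j\<in>{..<n}-{i0}. f j = 0" using True by simp
    hence cz: "\<forall>j\<in>{..<n}-{i0}. c j = 0" using z by auto
    have "(\<Sum>i<n. c i) = c i0 + (\<Sum>j\<in>{..<n}-{i0}. c j)"
      using i0(1) by (simp add: sum.remove)
    also have "\<dots> = c i0" using cz by simp
    also have "\<dots> \<le> K ^ f i0" using c i0 by auto
    also have "\<dots> \<le> K ^ S" using S i0(1) K1 by (intro power_increasing) auto
    finally show ?thesis .
  next
    case False
    hence "iota (\<Sum>j\<in>{..<n}-{i0}. f j) = 1" by (simp add: iota_def)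
    moreover have "f i0 + iota (\<Sum>j\<in>{..<n}-{i0}. f j) \<le> S" using S i0(1) by blast
    ultimately have "M + 1 \<le> S" using i0(2) by simp
    have "(\<Sum>i<n. c i) \<le> (\<Sum>i<n. K ^ M)"
    proof (rule sum_mono)
      fix i assume "i \<in> {..<n}"
      hence "c i \<le> K ^ f i" "f i \<le> M" using c fle by auto
      moreover have "K ^ f i \<le> K ^ M" using K1 \<open>f i \<le> M\<close> by (rule power_increasing[rotated])
      ultimately show "c i \<le> K ^ M" by linarith
    qed
    also have "\<dots> = n * K ^ M" by simp
    also have "\<dots> \<le> K * K ^ M" using assms(1) by simp
    also have "\<dots> = K ^ (M+1)" by simp
    also have "\<dots> \<le> K ^ S" using \<open>M + 1 \<le> S\<close> K1 by (intro power_increasing) auto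
    finally show ?thesis .
  qed
qed

lemma score_branch:
  assumes "xs = t1 # t2 # ts" "i < length xs"
  shows "score a (xs ! i) + iota (\<Sum>j\<in>{..<length xs}-{i}. score a (xs ! j))
     \<le> score a (Node g xs)"
proof -
  let ?ss = "map (score a) xs"
  have "score a (Node g xs) = Max {?ss ! i + iota (\<Sum>j\<in>{..<length ?ss} - {i}. ?ss ! j) | i. i < length ?ss}"
    using assms(1) by (simp add: Let_def)
  moreover have "?ss ! i + iota (\<Sum>j\<in>{..<length ?ss} - {i}. ?ss ! j) \<in> {?ss ! i + iota (\<Sum>j\<in>{..<length ?ss} - {i}. ?ss ! j) | i. i < length ?ss}"
    using assms(2) by (intro CollectI exI[of _ i]) simp
  moreover have "finite {?ss ! i + iota (\<Sum>j\<in>{..<length ?ss} - {i}. ?ss ! j) | i. i < length ?ss}"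
    by simp
  ultimately have "?ss ! i + iota (\<Sum>j\<in>{..<length ?ss} - {i}. ?ss ! j) \<le> score a (Node g xs)"
    using Max_ge by simp
  moreover have "(\<Sum>j\<in>{..<length ?ss} - {i}. ?ss ! j) = (\<Sum>j\<in>{..<length xs}-{i}. score a (xs ! j))"
    by (intro sum.cong) auto
  ultimately show ?thesis using assms(2) by simp
qed

lemma score_zero:
  "wf_tree m eps T \<Longrightarrow> a \<noteq> eps \<Longrightarrow> score a T = 0 \<Longrightarrow> count_lbl a T = 0"
proof (induction T)
  case (Node g ts)
  show ?case
  proof (cases ts)
    case Nil thus ?thesis using Node.prems by (simp add: iota_lbl_def)
  next
    case (Cons t1 r)
    show ?thesis
    proof (cases r)
      case Nil
      thus ?thesis using Node Cons by (auto simp: iota_lbl_def split: if_splits)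
    next
      case (Cons t2 ts')
      have g: "g = eps" using Node.prems \<open>ts = t1 # r\<close> Cons by auto
      have "\<forall>i<length ts. score a (ts ! i) = 0"
      proof (intro allI impI)
        fix i assume "i < length ts"
        hence "score a (ts ! i) + iota (\<Sum>j\<in>{..<length ts}-{i}. score a (ts ! j)) \<le> score a (Node g ts)"
          by (rule score_branch[OF \<open>ts = t1 # r\<close>[unfolded Cons]])
        thus "score a (ts ! i) = 0" using Node.prems(3) by simp
      qed
      have "\<forall>t\<in>set ts. count_lbl a t = 0"
      proof
        fix t assume t: "t \<in> set ts"
        then obtain i where i: "i < length ts" "t = ts ! i" by (auto simp: in_set_conv_nth)
        have "wf_tree m eps t" using Node.prems(1) t by simp
        thus "count_lbl a t = 0" using Node.IH[OF t] Node.prems(2) \<open>\<forall>i<length ts. score a (ts ! i) = 0\<close> i by simp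
      qed
      hence "sum_list (map (count_lbl a) ts) = 0" by (simp add: sum_list_eq_0_iff)
      thus ?thesis using g Node.prems by (simp add: iota_lbl_def)
    qed
  qed
qed

lemma count_bound:
  "wf_tree m eps T \<Longrightarrow> a \<noteq> eps \<Longrightarrow> 1 \<le> m \<Longrightarrow> count_lbl a T \<le> (m+1) ^ score a T"
proof (induction T)
  case (Node g ts)
  show ?case
  proof (cases ts)
    case Nil thus ?thesis using Node.prems by (simp add: iota_lbl_def)
  next
    case (Cons t1 r)
    show ?thesis
    proof (cases r)
      case Nil
      have IH: "count_lbl a t1 \<le> (m+1) ^ score a t1" using Node Cons Nil by auto
      have A: "1 + (m+1) ^ score a t1 \<le> (m+1) ^ (score a t1 + 1)"
      proof -
        have "1 \<le> (m+1) ^ score a t1" by simp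
        have "1 * 1 \<le> m * (m+1) ^ score a t1" using Node.prems(3) by (intro mult_le_mono) simp_all
        thus ?thesis by simp
      qed
      have cl: "count_lbl a (Node g ts) = count_lbl a t1 + iota_lbl a g"
        and sc: "score a (Node g ts) = score a t1 + iota_lbl a g" using Cons Nil by simp_all
      show ?thesis
      proof (cases "g = a")
        case True
        hence "iota_lbl a g = 1" by (simp add: iota_lbl_def)
        hence "iota_lbl a g = 1" .
        thus ?thesis unfolding cl sc using A IH by (simp only:)
      next
        case False
        hence "iota_lbl a g = 0" by (simp add: iota_lbl_def)
        thus ?thesis unfolding cl sc using IH by simp
      qed
    next
      case (Cons t2 ts')
      note ts = \<open>ts = t1 # r\<close>[unfolded Cons]
      have g: "g = eps" using Node.prems ts by auto
      have cnt: "count_lbl a (Node g ts) = (\<Sum>i<length ts. count_lbl a (ts ! i))"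
        using g Node.prems by (simp add: iota_lbl_def sum_list_sum_nth atLeast0LessThan)
      have "(\<Sum>i<length ts. count_lbl a (ts ! i)) \<le> (m+1) ^ score a (Node g ts)"
      proof (rule abs_bound[where f="\<lambda>i. score a (ts ! i)"])
        show "length ts \<le> m + 1" using Node.prems by simp
        show "0 < length ts" using ts by simp
        show "\<forall>i<length ts. count_lbl a (ts ! i) \<le> (m + 1) ^ score a (ts ! i)"
          using Node.IH Node.prems by simp
        show "\<forall>i<length ts. score a (ts ! i) = 0 \<longrightarrow> count_lbl a (ts ! i) = 0"
        proof (intro allI impI)
          fix i assume "i < length ts" "score a (ts ! i) = 0"
          moreover have "wf_tree m eps (ts ! i)" using Node.prems(1) \<open>i < length ts\<close> by simp
          ultimately show "count_lbl a (ts ! i) = 0" using score_zero[of m eps "ts ! i" a] Node.prems(2) by blast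
        qed
        show "\<forall>i<length ts. score a (ts ! i) + iota (\<Sum>j\<in>{..<length ts} - {i}. score a (ts ! j)) \<le> score a (Node g ts)"
          using score_branch[OF ts] by blast
      qed
      thus ?thesis using cnt by simp
    qed
  qed
qed

theorem mainTheorem7:
  fixes A :: "'g set" and eps :: 'g and m N :: nat and T :: "'g ltree"
  assumes "m \<ge> 1" and "finite A" and "card A = m" and "eps \<notin> A"
    and "wf_tree m eps T"
    and "N \<ge> 1"
    and "\<forall>a\<in>A. count_lbl a T \<ge> N"
  shows "\<forall>a\<in>A. real (score a T) \<ge> log (real (m + 1)) (real N)"
proof
  fix a assume a: "a \<in> A"
  hence "a \<noteq> eps" using assms(4) by auto
  hence "count_lbl a T \<le> (m+1) ^ score a T" using count_bound[OF assms(5) _ assms(1)] by simp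
  moreover have "N \<le> count_lbl a T" using assms(7) a by blast
  ultimately have "N \<le> (m+1) ^ score a T" by linarith
  hence "real N \<le> real ((m+1) ^ score a T)" by (simp only: of_nat_le_iff)
  hence "real N \<le> real (m+1) ^ score a T" by simp
  hence "log (real (m + 1)) (real N) \<le> log (real (m + 1)) (real (m+1) ^ score a T)"
    using assms(1,6) by (subst log_le_cancel_iff) auto
  also have "\<dots> = real (score a T)" using assms(1) by (simp add: log_nat_power)
  finally show "real (score a T) \<ge> log (real (m + 1)) (real N)" .
qed

end
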